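(* Let $\Gamma$ be a 3-colex and $c\neq c'$ colors. If $S$ is a $Z$-stabilizer of the 3D toric code on $\Gamma^{*\setminus cc'}$, then there exists a $Z$-stabilizer $\overline S$ of the color code on $\Gamma$ such that $\pi_{cc'}(\overline S)=S$ and $\pi_{xy}(\overline S)=I$ for every unordered pair $\{x,y\}$ of distinct colors with $\{x,y\}\neq\{c,c'\}$.
   Context: Colors are $\{r,b,g,y\}$. A 3-colex $\Gamma$ is a 3-dimensional cell complex without boundary in which every vertex is 4-valent and lies in exactly four 3-cells, and whose 3-cells are properly 4-colored: every face lies in exactly two 3-cells, which have different colors. The dual complex $\Gamma^*$ has an $i$-cell for every $(3-i)$-cell of $\Gamma$, with incidences reversed; every 3-cell of $\Gamma^*$ is a tetrahedron. A vertex of $\Gamma^*$ is given the color of the corresponding 3-cell of $\Gamma$, so the four vertices of each tetrahedron have distinct colors. An edge with endpoint colors $x,y$ is an $xy$-edge. The 3D color code on $\Gamma$ has one qubit per tetrahedron $\nu$ of $\Gamma^*$, $X$-stabilizer generators $\prod_{\nu\ni v}X_\nu$ for vertices $v$, and $Z$-stabilizer generators $B^Z_e=\prod_{\nu\supset e}Z_\nu$ for edges $e$; $Z$-stabilizers are products of the $B^Z_e$. For distinct colors $x,y$ with remaining colors $u,w$: $\pi_{xy}(\nu)$ is the unique $uw$-edge of the tetrahedron $\nu$, and $\pi_{xy}(\prod_{\nu\in\Omega}Z_\nu)=\prod_{\nu\in\Omega}Z_{\pi_{xy}(\nu)}$ (with $Z^2=I$); $\pi_{xy}=\pi_{yx}$.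 The minor complex $\Gamma^{*\setminus xy}$ has as vertices the $u$- and $w$-vertices of $\Gamma^*$, as edges the $uw$-edges of $\Gamma^*$, one face $f_e$ for each $xy$-edge $e$ of $\Gamma^*$ whose boundary $\partial f_e$ is the set of $uw$-edges of the tetrahedra containing $e$ (these form a cycle), and one 3-cell for each vertex of color $x$ or $y$. The 3D toric code on $\Gamma^{*\setminus xy}$ has qubits on edges and $Z$-stabilizer generators $B^Z_{f}=\prod_{t\in\partial f}Z_t$ for faces $f$; its $Z$-stabilizers are products of these. *)

theory Defs
  imports Main
begin

text \<open>
  Tetrahedra of \<Gamma>* (= vertices of \<Gamma>) form a finite set T.
  The triangle of a tetrahedron \<nu> opposite to its vertex of colour x
  (= the edge of \<Gamma> at \<nu> not lying in the x-coloured 3-cell) is shared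
  with exactly one other tetrahedron, adj x \<nu>.
  Cells of \<Gamma>* are read off as in the colour-graph (gem) encoding:
  the vertex of colour x of \<nu> is the set of tetrahedra reachable from \<nu>
  by gluings along colours other than x (the x-coloured 3-cell of \<Gamma>),
  and the edge of \<nu> with endpoint colours C = {x,y} is the set of
  tetrahedra reachable from \<nu> by gluings along the two colours not in C
  (the face of \<Gamma> between the x-cell and the y-cell).
\<close>

datatype color = Red | Blue | Green | Yellow

definition glue_rel :: "(color \<Rightarrow> 't \<Rightarrow> 't) \<Rightarrow> color set \<Rightarrow> ('t \<times> 't) set" where
  "glue_rel adj S = {(a, adj x a) | a x. x \<in> S}"

definition comp :: "(color \<Rightarrow> 't \<Rightarrow> 't) \<Rightarrow> color set \<Rightarrow> 't \<Rightarrow> 't set" where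
  "comp adj S \<nu> = {\<mu>. (\<nu>, \<mu>) \<in> (glue_rel adj S)\<^sup>*}"

definition dvert :: "(color \<Rightarrow> 't \<Rightarrow> 't) \<Rightarrow> 't \<Rightarrow> color \<Rightarrow> color \<times> 't set" where
  "dvert adj \<nu> x = (x, comp adj (- {x}) \<nu>)"

definition dedge :: "(color \<Rightarrow> 't \<Rightarrow> 't) \<Rightarrow> 't \<Rightarrow> color set \<Rightarrow> color set \<times> 't set" where
  "dedge adj \<nu> C = (C, comp adj (- C) \<nu>)"

definition dedges :: "'t set \<Rightarrow> (color \<Rightarrow> 't \<Rightarrow> 't) \<Rightarrow> (color set \<times> 't set) set" where
  "dedges T adj = {dedge adj \<nu> C | \<nu> C. \<nu> \<in> T \<and> card C = 2}"

definition tets_at :: "'t set \<Rightarrow> (color \<Rightarrow> 't \<Rightarrow> 't) \<Rightarrow> color set \<times> 't set \<Rightarrow> 't set" where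
  "tets_at T adj e = {\<nu> \<in> T. dedge adj \<nu> (fst e) = e}"

text \<open>Every triangle of \<Gamma>* lies in exactly
  two (distinct) tetrahedra, and around every edge e the opposite edges of the
  tetrahedra containing e are pairwise distinct (they form a cycle).\<close>
definition colex3 :: "'t set \<Rightarrow> (color \<Rightarrow> 't \<Rightarrow> 't) \<Rightarrow> bool" where
  "colex3 T adj \<longleftrightarrow> finite T \<and>
     (\<forall>\<nu>\<in>T. \<forall>x. adj x \<nu> \<in> T \<and> adj x \<nu> \<noteq> \<nu> \<and> adj x (adj x \<nu>) = \<nu>) \<and>
     (\<forall>e\<in>dedges T adj. inj_on (\<lambda>\<mu>. dedge adj \<mu> (- fst e)) (tets_at T adj e))"

text \<open>Z-type Pauli operators are represented by their supports; the product of
  the family f over I (with Z^2 = I) has support of qubits in an odd number of f i.\<close>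
definition zprod :: "('i \<Rightarrow> 'q set) \<Rightarrow> 'i set \<Rightarrow> 'q set" where
  "zprod f I = {q. odd (card {i \<in> I. q \<in> f i})}"

text \<open>Color code: qubits = tetrahedra, B^Z_e = product over tetrahedra containing e.\<close>
definition cc_Zstab :: "'t set \<Rightarrow> (color \<Rightarrow> 't \<Rightarrow> 't) \<Rightarrow> 't set \<Rightarrow> bool" where
  "cc_Zstab T adj S \<longleftrightarrow> (\<exists>Es \<subseteq> dedges T adj. S = zprod (tets_at T adj) Es)"

text \<open>pi_{xy}: each tetrahedron is mapped to its uw-edge, where {u,w} = - {x,y}.\<close>
definition proj :: "(color \<Rightarrow> 't \<Rightarrow> 't) \<Rightarrow> color \<Rightarrow> color \<Rightarrow> 't set \<Rightarrow> (color set \<times> 't set) set" where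
  "proj adj x y S = zprod (\<lambda>\<nu>. {dedge adj \<nu> (- {x, y})}) S"

text \<open>Minor complex \<Gamma>*\<setminus>xy: boundary of the face f_e for an xy-edge e.\<close>
definition face_bdry :: "'t set \<Rightarrow> (color \<Rightarrow> 't \<Rightarrow> 't) \<Rightarrow> color \<Rightarrow> color \<Rightarrow> color set \<times> 't set
    \<Rightarrow> (color set \<times> 't set) set" where
  "face_bdry T adj x y e = {dedge adj \<nu> (- {x, y}) | \<nu>. \<nu> \<in> tets_at T adj e}"

definition tc_Zstab :: "'t set \<Rightarrow> (color \<Rightarrow> 't \<Rightarrow> 't) \<Rightarrow> color \<Rightarrow> color
    \<Rightarrow> (color set \<times> 't set) set \<Rightarrow> bool" where
  "tc_Zstab T adj x y S \<longleftrightarrow>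
     (\<exists>Fs \<subseteq> {e \<in> dedges T adj. fst e = {x, y}}. S = zprod (face_bdry T adj x y) Fs)"

end

theory Submission
  imports Defs
begin


lemma even_card_involution:
  assumes "finite F" "\<And>x. x \<in> F \<Longrightarrow> h x \<in> F \<and> h (h x) = x \<and> h x \<noteq> x"
  shows "even (card F)"
  using assms
proof (induction "card F" arbitrary: F rule: less_induct)
  case less
  show ?case
  proof (cases "F = {}")
    case True then show ?thesis by simp
  next
    case False
    then obtain x where x: "x \<in> F" by blast
    define F' where "F' = F - {x, h x}"
    have hx: "h x \<in> F" "h x \<noteq> x" using less.prems(2)[OF x] by auto
    have cF: "card F = card F' + 2"
    proof -
      have "card F' = card F - card {x, h x}" unfolding F'_def
        using x hx less.prems(1) by (subst card_Diff_subset) auto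
      moreover have "card {x, h x} = 2" using hx by simp
      moreover have "card F \<ge> 2" using \<open>card {x, h x} = 2\<close> x hx less.prems(1)
        by (metis card_mono empty_subsetI insert_subset)
      ultimately show ?thesis by simp
    qed
    have "even (card F')"
    proof (rule less.hyps)
      show "card F' < card F" using cF by simp
      show "finite F'" using less.prems(1) F'_def by simp
      fix y assume y: "y \<in> F'"
      then have yF: "y \<in> F" "y \<noteq> x" "y \<noteq> h x" by (auto simp: F'_def)
      have p: "h y \<in> F \<and> h (h y) = y \<and> h y \<noteq> y" using less.prems(2)[OF yF(1)] .
      have "h y \<noteq> x" using p yF less.prems(2)[OF x] by metis
      moreover have "h y \<noteq> h x" using p yF less.prems(2)[OF x] by metis
      ultimately show "h y \<in> F' \<and> h (h y) = y \<and> h y \<noteq> y" using p by (auto simp: F'_def)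
    qed
    then show ?thesis using cF by simp
  qed
qed

lemma zprod_zprod:
  assumes fI: "finite I" and fA: "finite A" and sub: "\<And>i. i \<in> I \<Longrightarrow> f i \<subseteq> A"
  shows "zprod g (zprod f I) = zprod (\<lambda>i. zprod g (f i)) I"
proof -
  have "q \<in> zprod g (zprod f I) \<longleftrightarrow> q \<in> zprod (\<lambda>i. zprod g (f i)) I" for q
  proof -
    define A' where "A' = {\<nu>\<in>A. q \<in> g \<nu>}"
    define k where "k \<nu> = card {i\<in>I. \<nu> \<in> f i}" for \<nu>
    define m where "m i = card {\<nu>\<in>f i. q \<in> g \<nu>}" for i
    have fA': "finite A'" using fA by (simp add: A'_def)
    have e1: "{\<nu>\<in>zprod f I. q \<in> g \<nu>} = {\<nu>\<in>A'. odd (k \<nu>)}"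
    proof -
      have "\<nu> \<in> A" if "odd (k \<nu>)" for \<nu>
      proof -
        from that have "{i\<in>I. \<nu> \<in> f i} \<noteq> {}" unfolding k_def by (metis card.empty even_zero)
        then show ?thesis using sub by blast
      qed
      then show ?thesis by (auto simp: zprod_def A'_def k_def)
    qed
    have s: "(\<Sum>\<nu>\<in>A'. k \<nu>) = (\<Sum>i\<in>I. m i)"
    proof -
      have "(\<Sum>\<nu>\<in>A'. k \<nu>) = (\<Sum>\<nu>\<in>A'. \<Sum>i\<in>I. if \<nu> \<in> f i then 1 else 0)"
        unfolding k_def using fI by (simp add: sum.inter_filter[symmetric])
      also have "\<dots> = (\<Sum>i\<in>I. \<Sum>\<nu>\<in>A'. if \<nu> \<in> f i then 1 else 0)"
        by (rule sum.swap)
      also have "\<dots> = (\<Sum>i\<in>I. m i)"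
      proof (rule sum.cong)
        fix i assume i: "i \<in> I"
        have "(\<Sum>\<nu>\<in>A'. if \<nu> \<in> f i then 1 else 0) = card {\<nu>\<in>A'. \<nu> \<in> f i}"
          using fA' by (simp add: sum.inter_filter[symmetric])
        also have "{\<nu>\<in>A'. \<nu> \<in> f i} = {\<nu>\<in>f i. q \<in> g \<nu>}" using sub[OF i] by (auto simp: A'_def)
        finally show "(\<Sum>\<nu>\<in>A'. if \<nu> \<in> f i then 1 else 0) = m i" by (simp add: m_def)
      qed simp
      finally show ?thesis .
    qed
    have "q \<in> zprod g (zprod f I) \<longleftrightarrow> odd (card {\<nu>\<in>A'. odd (k \<nu>)})"
      using e1 by (simp add: zprod_def)
    also have "\<dots> \<longleftrightarrow> odd (\<Sum>\<nu>\<in>A'. k \<nu>)" using even_sum_iff[OF fA', of k] by simp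
    also have "\<dots> \<longleftrightarrow> odd (card {i\<in>I. odd (m i)})" using s even_sum_iff[OF fI] by simp
    also have "\<dots> \<longleftrightarrow> q \<in> zprod (\<lambda>i. zprod g (f i)) I" by (simp add: zprod_def m_def)
    finally show ?thesis .
  qed
  then show ?thesis by blast
qed

lemma zprod_cong: "(\<And>i. i \<in> I \<Longrightarrow> f i = g i) \<Longrightarrow> zprod f I = zprod g I"
  unfolding zprod_def by (metis (no_types, lifting) Collect_cong)

lemma zprod_empty: "zprod (\<lambda>i. {}) I = {}"
  unfolding zprod_def by simp

lemma finite_color: "finite (UNIV :: color set)"
proof -
  have "(UNIV :: color set) = {Red, Blue, Green, Yellow}" by (auto intro: color.exhaust)
  then show ?thesis by (metis finite.emptyI finite_insert)
qed

lemma finite_dedges: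
  assumes "finite T" shows "finite (dedges T adj)"
proof -
  have "finite (UNIV :: color set set)" using finite_color by (simp add: Finite_Set.finite_set)
  then have "finite ((\<lambda>(\<nu>, C). dedge adj \<nu> C) ` (T \<times> UNIV))" using assms by simp
  moreover have m: "dedge adj \<nu> C \<in> (\<lambda>(\<nu>, C). dedge adj \<nu> C) ` (T \<times> UNIV)" if "\<nu> \<in> T" for \<nu> C
    by (rule rev_image_eqI[of "(\<nu>, C)"]) (use that in auto)
  have "dedges T adj \<subseteq> (\<lambda>(\<nu>, C). dedge adj \<nu> C) ` (T \<times> UNIV)"
    unfolding dedges_def using m by blast
  ultimately show ?thesis by (rule finite_subset[rotated])
qed

lemma comp_adj:
  assumes "colex3 T adj" "\<nu> \<in> T" "z \<in> S"
  shows "comp adj S (adj z \<nu>) = comp adj S \<nu>"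
proof -
  have inv: "adj z (adj z \<nu>) = \<nu>" using assms unfolding colex3_def by blast
  have r1: "(\<nu>, adj z \<nu>) \<in> glue_rel adj S" using assms(3) unfolding glue_rel_def by blast
  have r2: "(adj z \<nu>, \<nu>) \<in> glue_rel adj S" using assms(3) inv unfolding glue_rel_def
    by (metis (mono_tags, lifting) mem_Collect_eq)
  show ?thesis unfolding comp_def
    using r1 r2 by (auto intro: rtrancl_trans[OF r_into_rtrancl])
qed


lemma t1:
  fixes T :: "'t set" and adj :: "color \<Rightarrow> 't \<Rightarrow> 't" 
  assumes "colex3 T adj" "Fs \<subseteq> {e \<in> dedges T adj. fst e = {c, c'}}"
  shows "finite Fs"
proof -
  have fT: "finite T" using assms(1) unfolding colex3_def by blast
  show "finite Fs" by (rule finite_subset[OF _ finite_dedges[OF fT]]) (use assms(2) in auto)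
qed
lemma t2:
  fixes T :: "'t set" and adj :: "color \<Rightarrow> 't \<Rightarrow> 't" 
  assumes "colex3 T adj" "e \<in> dedges T adj" "fst e = {c, c'}"
  shows "inj_on (\<lambda>\<mu>. dedge adj \<mu> (- {c, c'})) (tets_at T adj e)"
proof -
  have "\<forall>e\<in>dedges T adj. inj_on (\<lambda>\<mu>. dedge adj \<mu> (- fst e)) (tets_at T adj e)"
    using assms(1) by (simp add: colex3_def)
  then show ?thesis using assms(2,3) by force
qed

lemma proj_cc:
  fixes T :: "'t set" and adj :: "color \<Rightarrow> 't \<Rightarrow> 't" 
  assumes "colex3 T adj" "e \<in> dedges T adj" "fst e = {c, c'}"
  shows "proj adj c c' (tets_at T adj e) = face_bdry T adj c c' e"
proof (rule set_eqI)
  fix q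
  let ?d = "\<lambda>\<mu>. dedge adj \<mu> (- {c, c'})"
  have inj: "inj_on ?d (tets_at T adj e)" by (rule t2[OF assms])
  have fb: "face_bdry T adj c c' e = ?d ` tets_at T adj e" unfolding face_bdry_def by blast
  show "q \<in> proj adj c c' (tets_at T adj e) \<longleftrightarrow> q \<in> face_bdry T adj c c' e"
  proof (cases "q \<in> ?d ` tets_at T adj e")
    case True
    then obtain \<nu>0 where \<nu>0: "\<nu>0 \<in> tets_at T adj e" "q = ?d \<nu>0" by blast
    have "{\<nu> \<in> tets_at T adj e. q \<in> {?d \<nu>}} = {\<nu>0}"
    proof (rule set_eqI, rule iffI)
      fix \<nu> assume "\<nu> \<in> {\<nu> \<in> tets_at T adj e. q \<in> {?d \<nu>}}"
      then have "\<nu> \<in> tets_at T adj e" "?d \<nu> = ?d \<nu>0" using \<nu>0 by auto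
      then show "\<nu> \<in> {\<nu>0}" using inj \<nu>0(1) unfolding inj_on_def by blast
    qed (use \<nu>0 in auto)
    then have "q \<in> proj adj c c' (tets_at T adj e)" unfolding proj_def zprod_def by simp
    then show ?thesis using True fb by simp
  next
    case False
    then have "{\<nu> \<in> tets_at T adj e. q \<in> {?d \<nu>}} = {}" by auto
    then have "q \<notin> proj adj c c' (tets_at T adj e)" unfolding proj_def zprod_def
      by (simp only: mem_Collect_eq card.empty) simp
    then show ?thesis using False fb by simp
  qed
qed

lemma proj_other:
  fixes T :: "'t set" and adj :: "color \<Rightarrow> 't \<Rightarrow> 't" 
  assumes col: "colex3 T adj" and fe: "fst e = {c, c'}" and z: "z \<in> {x, y}" "z \<notin> {c, c'}"
  shows "proj adj x y (tets_at T adj e) = {}"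
proof -
  have fT: "finite T" using col unfolding colex3_def by blast
  have "even (card {\<nu> \<in> tets_at T adj e. q \<in> {dedge adj \<nu> (- {x, y})}})" for q
  proof (rule even_card_involution)
    show "finite {\<nu> \<in> tets_at T adj e. q \<in> {dedge adj \<nu> (- {x, y})}}"
      by (rule finite_subset[OF _ fT]) (auto simp: tets_at_def)
    fix \<nu> assume \<nu>: "\<nu> \<in> {\<nu> \<in> tets_at T adj e. q \<in> {dedge adj \<nu> (- {x, y})}}"
    then have \<nu>T: "\<nu> \<in> T" and de: "dedge adj \<nu> {c, c'} = e"
      and dq: "q = dedge adj \<nu> (- {x, y})"
      unfolding tets_at_def using fe by auto
    have props: "adj z \<nu> \<in> T" "adj z (adj z \<nu>) = \<nu>" "adj z \<nu> \<noteq> \<nu>"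
      using col \<nu>T unfolding colex3_def by blast+
    have z1: "z \<in> - {c, c'}" using z by simp
    have z2: "z \<in> - (- {x, y})" using z by simp
    have c1: "comp adj (- {c, c'}) (adj z \<nu>) = comp adj (- {c, c'}) \<nu>"
      by (rule comp_adj[OF col \<nu>T z1])
    have c2: "comp adj (- (- {x, y})) (adj z \<nu>) = comp adj (- (- {x, y})) \<nu>"
      by (rule comp_adj[OF col \<nu>T z2])
    have "dedge adj (adj z \<nu>) {c, c'} = e" using de c1 unfolding dedge_def by simp
    then have "adj z \<nu> \<in> tets_at T adj e" using props(1) fe unfolding tets_at_def by simp
    moreover have "q \<in> {dedge adj (adj z \<nu>) (- {x, y})}" using dq c2 unfolding dedge_def by simp
    ultimately show "adj z \<nu> \<in> {\<nu> \<in> tets_at T adj e. q \<in> {dedge adj \<nu> (- {x, y})}} \<and>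
        adj z (adj z \<nu>) = \<nu> \<and> adj z \<nu> \<noteq> \<nu>" using props by blast
  qed
  then show ?thesis unfolding proj_def zprod_def by auto
qed

theorem lemma11:
  fixes T :: "'t set" and adj :: "color \<Rightarrow> 't \<Rightarrow> 't" and c c' :: color
    and S :: "(color set \<times> 't set) set"
  assumes "colex3 T adj"
    and "c \<noteq> c'"
    and "tc_Zstab T adj c c' S"
  shows "\<exists>Sb. cc_Zstab T adj Sb \<and> proj adj c c' Sb = S \<and>
           (\<forall>x y. x \<noteq> y \<and> {x, y} \<noteq> {c, c'} \<longrightarrow> proj adj x y Sb = {})"
proof -
  obtain Fs where Fs: "Fs \<subseteq> {e \<in> dedges T adj. fst e = {c, c'}}"
    and S: "S = zprod (face_bdry T adj c c') Fs"
    using assms(3) unfolding tc_Zstab_def by blast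
  have fT: "finite T" using assms(1) unfolding colex3_def by blast
  have fFs: "finite Fs" by (rule t1[OF assms(1) Fs])
  have tsub: "\<And>e. tets_at T adj e \<subseteq> T" unfolding tets_at_def by blast
  define Sb where "Sb = zprod (tets_at T adj) Fs"
  have projSb: "proj adj x y Sb = zprod (\<lambda>e. proj adj x y (tets_at T adj e)) Fs" for x y
    unfolding proj_def Sb_def by (rule zprod_zprod[OF fFs fT tsub])
  have cc: "cc_Zstab T adj Sb" unfolding cc_Zstab_def Sb_def using Fs by blast
  have main: "proj adj c c' Sb = S"
    unfolding projSb S
  proof (rule zprod_cong)
    fix e assume "e \<in> Fs"
    then have "e \<in> dedges T adj" "fst e = {c, c'}" using Fs by auto
    then show "proj adj c c' (tets_at T adj e) = face_bdry T adj c c' e"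
      by (rule proj_cc[OF assms(1)])
  qed
  have other: "proj adj x y Sb = {}" if xy: "x \<noteq> y" "{x, y} \<noteq> {c, c'}" for x y
  proof -
    have "\<exists>z. z \<in> {x, y} \<and> z \<notin> {c, c'}"
    proof (rule ccontr)
      assume "\<not> ?thesis"
      then have "x \<in> {c, c'}" "y \<in> {c, c'}" by auto
      then show False using xy by auto
    qed
    then obtain z where z: "z \<in> {x, y}" "z \<notin> {c, c'}" by blast
    have "proj adj x y Sb = zprod (\<lambda>e. {}) Fs" unfolding projSb
    proof (rule zprod_cong)
      fix e assume "e \<in> Fs"
      then have "fst e = {c, c'}" using Fs by auto
      then show "proj adj x y (tets_at T adj e) = {}" by (rule proj_other[OF assms(1) _ z])
    qed
    then show ?thesis by (simp add: zprod_empty)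
  qed
  show ?thesis using cc main other by blast
qed

end
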